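(* Let $G$ be a strongly connected network on $\mathcal{V}$ with random-walk transition matrix $P$, stationary distribution $\pi$, $\Pi=\mathrm{diag}(\pi)$, and let $L^+$ be the Moore–Penrose pseudo-inverse of $L=\Pi(I-P)$. Then for all $i,k,m\in\mathcal{V}$, $$L^+_{im}+L^+_{kk}\geq L^+_{ik}+L^+_{km}.$$
   Context: $P=D^{-1}A$ for a nonnegative affinity matrix $A$ of a directed graph, $D=\mathrm{diag}(\sum_j a_{ij})$; strongly connected means all nodes mutually reachable. *)

theory Defs
  imports "HOL-Analysis.Analysis"
begin

text \<open>Vertex set = the finite type 'n. A is the nonnegative affinity matrix.\<close>

definition edge_rel :: "real^'n^'n \<Rightarrow> ('n \<times> 'n) set" where
  "edge_rel A = {(i, j). A $ i $ j > 0}"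

definition strongly_connected :: "real^'n^'n \<Rightarrow> bool" where
  "strongly_connected A \<longleftrightarrow> (\<forall>i j. (i, j) \<in> (edge_rel A)\<^sup>*)"

definition degree_matrix :: "real^'n^'n \<Rightarrow> real^'n^'n" where
  "degree_matrix A = (\<chi> i j. if i = j then (\<Sum>k\<in>UNIV. A $ i $ k) else 0)"

definition rw_matrix :: "real^'n^'n \<Rightarrow> real^'n^'n" where
  "rw_matrix A = matrix_inv (degree_matrix A) ** A"

definition diag_vec :: "real^'n \<Rightarrow> real^'n^'n" where
  "diag_vec v = (\<chi> i j. if i = j then v $ i else 0)"

definition stationary_distribution :: "real^'n^'n \<Rightarrow> real^'n \<Rightarrow> bool" where
  "stationary_distribution P \<pi> \<longleftrightarrow>
     (\<forall>i. \<pi> $ i \<ge> 0) \<and> (\<Sum>i\<in>UNIV. \<pi> $ i) = 1 \<and> \<pi> v* P = \<pi>"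

definition penrose_conds :: "real^'n^'n \<Rightarrow> real^'n^'n \<Rightarrow> bool" where
  "penrose_conds M X \<longleftrightarrow>
     M ** X ** M = M \<and> X ** M ** X = X \<and>
     transpose (M ** X) = M ** X \<and> transpose (X ** M) = X ** M"

definition pinv :: "real^'n^'n \<Rightarrow> real^'n^'n" where
  "pinv M = (THE X. penrose_conds M X)"

end

theory Submission
  imports Defs
begin

lemma minprin:
  fixes x :: "'n::finite \<Rightarrow> real"
  assumes sc: "\<forall>i j. (i,j) \<in> R\<^sup>*"
    and h: "\<forall>j. j \<noteq> k \<longrightarrow> (\<forall>l. x j \<le> x l) \<longrightarrow> (\<forall>l. (j,l) \<in> R \<longrightarrow> x l \<le> x j)"
  shows "x k \<le> x i"
proof (rule ccontr)
  assume ni: "\<not> x k \<le> x i"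
  obtain j0 where j0: "\<forall>l. x j0 \<le> x l"
  proof -
    have "finite (range x)" by simp
    then obtain y where "y \<in> range x" "\<forall>z\<in>range x. y \<le> z"
      by (metis Min_in Min_le UNIV_not_empty empty_is_image)
    then show ?thesis using that by auto
  qed
  have "\<And>b. (j0,b) \<in> R\<^sup>* \<Longrightarrow> x b \<le> x j0"
  proof -
    fix b assume "(j0,b) \<in> R\<^sup>*"
    then show "x b \<le> x j0"
    proof (induction rule: rtrancl_induct)
      case base then show ?case by simp
    next
      case (step a b)
      have am: "\<forall>l. x a \<le> x l" using step j0 by (meson order_trans)
      have "a \<noteq> k" using step j0 ni by (meson order_trans)
      then have "x b \<le> x a" using h am step by blast
      then show ?case using step by linarith
    qed
  qed
  then have "x k \<le> x j0" using sc by blast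
  then show False using ni j0 by (meson order_trans)
qed

lemma sum_step:
  fixes w x :: "'n::finite \<Rightarrow> real"
  assumes "\<forall>l. w l \<ge> 0" "\<forall>l. x j \<le> x l" "0 \<le> (\<Sum>l\<in>UNIV. w l * (x j - x l))" "w l > 0"
  shows "x l \<le> x j"
proof -
  define g where "g l = w l * (x l - x j)" for l
  have gnn: "\<forall>l\<in>UNIV. 0 \<le> g l" unfolding g_def using assms(1,2) by simp
  have "(\<Sum>l\<in>UNIV. g l) = - (\<Sum>l\<in>UNIV. w l * (x j - x l))"
    unfolding g_def by (simp add: sum_negf[symmetric] algebra_simps)
  then have "(\<Sum>l\<in>UNIV. g l) \<le> 0" using assms(3) by linarith
  moreover have "0 \<le> (\<Sum>l\<in>UNIV. g l)" using gnn by (simp add: sum_nonneg)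
  ultimately have "(\<Sum>l\<in>UNIV. g l) = 0" by linarith
  then have "\<forall>l\<in>UNIV. g l = 0" using sum_nonneg_eq_0_iff[of UNIV g] gnn by simp
  then have "w l * (x l - x j) = 0" unfolding g_def by blast
  then show ?thesis using assms(4) by simp
qed

lemma pinv_unique:
  fixes L X Y :: "real^'n^'n"
  assumes X: "penrose_conds L X" and Y: "penrose_conds L Y"
  shows "X = Y"
proof -
  from X have x1: "L ** X ** L = L" and x2: "X ** L ** X = X" and x3: "transpose (L ** X) = L ** X"
    and x4: "transpose (X ** L) = X ** L" by (auto simp: penrose_conds_def)
  from Y have y1: "L ** Y ** L = L" and y2: "Y ** L ** Y = Y" and y3: "transpose (L ** Y) = L ** Y"
    and y4: "transpose (Y ** L) = Y ** L" by (auto simp: penrose_conds_def)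
  have tL1: "transpose L = transpose L ** (L ** Y)"
  proof -
    have "transpose L = transpose (L ** Y ** L)" using y1 by simp
    also have "\<dots> = transpose L ** transpose (L ** Y)" by (simp only: matrix_transpose_mul)
    finally show ?thesis using y3 by simp
  qed
  have tL2: "transpose L = (X ** L) ** transpose L"
  proof -
    have "transpose L = transpose (L ** (X ** L))" using x1 by (simp add: matrix_mul_assoc)
    also have "\<dots> = transpose (X ** L) ** transpose L" by (simp only: matrix_transpose_mul)
    finally show ?thesis using x4 by simp
  qed
  have LX: "L ** X = transpose X ** transpose L" using x3 by (simp only: matrix_transpose_mul[symmetric])
  have XL: "X ** L = transpose L ** transpose X" using x4 by (simp only: matrix_transpose_mul[symmetric])
  have LY: "L ** Y = transpose Y ** transpose L" using y3 by (simp only: matrix_transpose_mul[symmetric])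
  have YL: "Y ** L = transpose L ** transpose Y" using y4 by (simp only: matrix_transpose_mul[symmetric])
  have "X = X ** (L ** X)" using x2 by (simp add: matrix_mul_assoc)
  also have "\<dots> = X ** (transpose X ** (transpose L ** (L ** Y)))" using LX tL1 by simp
  also have "\<dots> = (X ** (transpose X ** transpose L)) ** (L ** Y)" by (simp only: matrix_mul_assoc)
  also have "\<dots> = X ** (L ** Y)"
  proof -
    have e: "X ** (transpose X ** transpose L) = X" by (subst LX[symmetric]) (simp add: x2 matrix_mul_assoc)
    show ?thesis by (subst e) (rule refl)
  qed
  also have "\<dots> = X ** L ** Y" by (simp add: matrix_mul_assoc)
  finally have eX: "X = X ** L ** Y" .
  have "Y = (Y ** L) ** Y" using y2 by simp
  also have "\<dots> = (((X ** L) ** transpose L) ** transpose Y) ** Y"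
    by (subst YL, subst tL2, rule refl)
  also have "\<dots> = (X ** L) ** ((transpose L ** transpose Y) ** Y)" by (simp only: matrix_mul_assoc)
  also have "\<dots> = X ** L ** Y"
  proof -
    have e: "(transpose L ** transpose Y) ** Y = Y" by (subst YL[symmetric]) (simp add: y2)
    show ?thesis by (subst e) (simp add: matrix_mul_assoc)
  qed
  finally show ?thesis using eX by simp
qed


lemma sdl: "(\<Sum>c\<in>(UNIV::'n::finite set). (if a = c then u c else 0) * (f c::real)) = u a * f a"
proof -
  have "(\<Sum>c\<in>(UNIV::'n set). (if a = c then u c else 0) * f c) = (\<Sum>c\<in>UNIV. if a = c then u a * f a else 0)"
    by (rule sum.cong) auto
  then show ?thesis by simp
qed
lemma sdr: "(\<Sum>c\<in>(UNIV::'n::finite set). (f c::real) * (if c = b then u c else 0)) = f b * u b"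
proof -
  have "(\<Sum>c\<in>(UNIV::'n set). f c * (if c = b then u c else 0)) = (\<Sum>c\<in>UNIV. if b = c then f b * u b else 0)"
    by (rule sum.cong) auto
  then show ?thesis by simp
qed
lemma sdr1: "(\<Sum>c\<in>(UNIV::'n::finite set). (f c::real) * (if c = b then 1 else 0)) = f b"
  using sdr[of f b "\<lambda>_. 1"] by simp

lemma sdl1: "(\<Sum>c\<in>(UNIV::'n::finite set). (if a = c then 1 else 0) * (f c::real)) = f a"
  using sdl[of a "\<lambda>_. 1" f] by simp

lemma mm_add_r: "((A::real^'n^'m) + B) ** (C::real^'p^'n) = A ** C + B ** C"
  by (simp add: matrix_matrix_mult_def vec_eq_iff distrib_right sum.distrib)
lemma mm_diff_r: "((A::real^'n^'m) - B) ** (C::real^'p^'n) = A ** C - B ** C"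
  by (simp add: matrix_matrix_mult_def vec_eq_iff left_diff_distrib sum_subtractf)
lemma mm_diff_l: "(A::real^'n^'m) ** ((B::real^'p^'n) - C) = A ** B - A ** C"
  by (simp add: matrix_matrix_mult_def vec_eq_iff right_diff_distrib sum_subtractf)

theorem mainTheorem16:
  fixes A :: "real^'n^'n" and \<pi> :: "real^'n" and i k m :: 'n
  assumes nonneg: "\<forall>a b. A $ a $ b \<ge> 0"
    and sc: "strongly_connected A"
    and st: "stationary_distribution (rw_matrix A) \<pi>"
  shows "let L = diag_vec \<pi> ** (mat 1 - rw_matrix A); Lp = pinv L
         in Lp $ i $ m + Lp $ k $ k \<ge> Lp $ i $ k + Lp $ k $ m"
proof (cases "\<forall>a b::'n. a = b")
  case True
  then have "i = k" "m = k" by blast+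
  then show ?thesis by (simp add: Let_def)
next
  case False
  have scR: "\<forall>a b. (a, b) \<in> (edge_rel A)\<^sup>*" using sc by (simp add: strongly_connected_def)
  define d where "d j = (\<Sum>l\<in>UNIV. A $ j $ l)" for j
  have dpos: "d j > 0" for j
  proof -
    obtain l where "l \<noteq> j" using False by metis
    moreover have "(j, l) \<in> (edge_rel A)\<^sup>*" using scR by blast
    ultimately obtain l' where "(j, l') \<in> edge_rel A" by (metis converse_rtranclE)
    then have pos: "A $ j $ l' > 0" by (simp add: edge_rel_def)
    have "A $ j $ l' \<le> d j" unfolding d_def
      by (rule member_le_sum) (use nonneg in auto)
    then show ?thesis using pos by linarith
  qed
  define Di :: "real^'n^'n" where "Di = (\<chi> a b. if a = b then 1 / d a else 0)"
  have D: "degree_matrix A = (\<chi> a b. if a = b then d a else 0)"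
    by (simp add: degree_matrix_def d_def vec_eq_iff)
  have DDi: "degree_matrix A ** Di = mat 1"
    using dpos unfolding D Di_def
    by (simp add: matrix_matrix_mult_def mat_def vec_eq_iff sdl sdr less_imp_neq[symmetric])
  have DiD: "Di ** degree_matrix A = mat 1"
    using dpos unfolding D Di_def
    by (simp add: matrix_matrix_mult_def mat_def vec_eq_iff sdl sdr less_imp_neq[symmetric])
  have Minv: "matrix_inv (degree_matrix A) = Di"
  proof -
    let ?M = "matrix_inv (degree_matrix A)"
    have "degree_matrix A ** ?M = mat 1 \<and> ?M ** degree_matrix A = mat 1"
      unfolding matrix_inv_def by (rule someI[of _ Di]) (use DDi DiD in auto)
    then have "?M ** degree_matrix A = mat 1" by simp
    then have "?M = ?M ** (degree_matrix A ** Di)" using DDi by simp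
    also have "\<dots> = Di" using \<open>?M ** degree_matrix A = mat 1\<close> by (simp add: matrix_mul_assoc)
    finally show ?thesis .
  qed
  define P where "P = rw_matrix A"
  have Pent: "P $ a $ b = A $ a $ b / d a" for a b
    unfolding P_def rw_matrix_def Minv Di_def
    by (simp add: matrix_matrix_mult_def sdl)
  have Pnn: "P $ a $ b \<ge> 0" for a b unfolding Pent using nonneg dpos[of a] by (simp add: divide_nonneg_pos)
  have Ppos: "A $ a $ b > 0 \<Longrightarrow> P $ a $ b > 0" for a b unfolding Pent using dpos[of a] by (simp add: divide_pos_pos)
  have Prow: "(\<Sum>b\<in>UNIV. P $ a $ b) = 1" for a
    using dpos[of a] by (simp add: Pent d_def sum_divide_distrib[symmetric])
  have pinn: "\<pi> $ a \<ge> 0" for a using st by (simp add: stationary_distribution_def)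
  have pisum: "(\<Sum>a\<in>UNIV. \<pi> $ a) = 1" using st by (simp add: stationary_distribution_def)
  have pistat: "(\<Sum>a\<in>UNIV. \<pi> $ a * P $ a $ b) = \<pi> $ b" for b
  proof -
    have "\<pi> v* P = \<pi>" using st by (simp add: stationary_distribution_def P_def)
    then have "(\<pi> v* P) $ b = \<pi> $ b" by simp
    then show ?thesis by (simp add: vector_matrix_mult_def mult.commute)
  qed
  have pipos: "\<pi> $ a > 0" for a
  proof (rule ccontr)
    assume "\<not> \<pi> $ a > 0"
    then have z: "\<pi> $ a = 0" using pinn[of a] by simp
    have "\<pi> $ c = 0" for c
    proof -
      have "(c, a) \<in> (edge_rel A)\<^sup>*" using scR by blast
      then show ?thesis
      proof (induction rule: converse_rtrancl_induct)
        case base then show ?case using z .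
      next
        case (step y z)
        have Pyz: "P $ y $ z > 0" using step Ppos by (simp add: edge_rel_def)
        have "\<pi> $ y * P $ y $ z \<le> (\<Sum>a\<in>UNIV. \<pi> $ a * P $ a $ z)"
          by (rule member_le_sum) (use pinn Pnn in auto)
        then have "\<pi> $ y * P $ y $ z \<le> 0" using pistat[of z] step by simp
        then have "\<pi> $ y \<le> 0" using Pyz by (simp add: mult_le_0_iff)
        then show ?case using pinn[of y] by simp
      qed
    qed
    then show False using pisum by simp
  qed
  define L where "L = diag_vec \<pi> ** (mat 1 - rw_matrix A)"
  have Lent: "L $ a $ b = \<pi> $ a * ((if a = b then 1 else 0) - P $ a $ b)" for a b
    unfolding L_def P_def diag_vec_def
    by (simp add: matrix_matrix_mult_def mat_def sdl)
  have Lcol: "(\<Sum>a\<in>UNIV. L $ a $ b) = 0" for b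
    using pistat[of b] by (simp add: Lent right_diff_distrib sum_subtractf sdr1)
  have Lv: "(L *v x) $ a = \<pi> $ a * (\<Sum>b\<in>UNIV. P $ a $ b * (x $ a - x $ b))" for x a
  proof -
    have "(\<Sum>b\<in>UNIV. P $ a $ b * (x $ a - x $ b)) = x $ a - (\<Sum>b\<in>UNIV. P $ a $ b * x $ b)"
      using Prow[of a] by (simp add: right_diff_distrib sum_subtractf sum_distrib_right[symmetric])
    moreover have "(L *v x) $ a = (\<Sum>b\<in>UNIV. \<pi> $ a * ((if a = b then 1 else 0) * x $ b) - \<pi> $ a * (P $ a $ b * x $ b))"
      by (simp add: matrix_vector_mult_def Lent left_diff_distrib right_diff_distrib mult.assoc)
    moreover have "\<dots> = \<pi> $ a * x $ a - \<pi> $ a * (\<Sum>b\<in>UNIV. P $ a $ b * x $ b)"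
      by (simp only: sum_subtractf sum_distrib_left[symmetric] sdl1)
    ultimately show ?thesis by (simp add: right_diff_distrib)
  qed
  have stepR: "\<And>x a. 0 \<le> (L *v x) $ a \<Longrightarrow> (\<forall>l. x $ a \<le> x $ l) \<Longrightarrow>
       (\<forall>l. (a, l) \<in> edge_rel A \<longrightarrow> x $ l \<le> x $ a)"
  proof (intro allI impI)
    fix x :: "real^'n" and a l
    assume h1: "0 \<le> (L *v x) $ a" and h2: "\<forall>l. x $ a \<le> x $ l" and h3: "(a, l) \<in> edge_rel A"
    have "0 \<le> (\<Sum>b\<in>UNIV. P $ a $ b * (x $ a - x $ b))"
      using h1 pipos[of a] unfolding Lv by (simp add: zero_le_mult_iff)
    then show "x $ l \<le> x $ a"
      using sum_step[of "\<lambda>b. P $ a $ b" "\<lambda>b. x $ b" a l] h2 Pnn Ppos h3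
      by (simp add: edge_rel_def)
  qed
  have Lker: "L *v y = 0 \<Longrightarrow> y $ a = y $ b" for y a b
  proof -
    assume "L *v y = 0"
    then have h: "\<forall>j. j \<noteq> c \<longrightarrow> (\<forall>l. y $ j \<le> y $ l) \<longrightarrow> (\<forall>l. (j, l) \<in> edge_rel A \<longrightarrow> y $ l \<le> y $ j)" for c
      using stepR[of y] by simp
    have "y $ a \<le> y $ b" using minprin[OF scR h, of a b] by simp
    moreover have "y $ b \<le> y $ a" using minprin[OF scR h, of b a] by simp
    ultimately show ?thesis by simp
  qed
  define n where "n = real CARD('n)"
  have npos: "n > 0" unfolding n_def by simp
  define E :: "real^'n^'n" where "E = (\<chi> a b. 1 / n)"
  have LE: "L ** E = 0"
  proof -
    have "(\<Sum>b\<in>UNIV. L $ a $ b) = 0" for a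
      using Prow[of a] by (simp add: Lent sum_distrib_left[symmetric] sum_subtractf)
    then show ?thesis
      by (simp add: E_def matrix_matrix_mult_def vec_eq_iff sum_divide_distrib[symmetric])
  qed
  have EL: "E ** L = 0"
    using Lcol by (simp add: E_def matrix_matrix_mult_def vec_eq_iff sum_divide_distrib[symmetric])
  have EE: "E ** E = E"
    using npos by (simp add: E_def matrix_matrix_mult_def vec_eq_iff n_def)
  have Ev: "(E *v y) $ a = (\<Sum>b\<in>UNIV. y $ b) / n" for y a
    by (simp add: E_def matrix_vector_mult_def sum_divide_distrib)
  define B where "B = L + E"
  have Binj: "\<forall>y. B *v y = 0 \<longrightarrow> y = 0"
  proof (intro allI impI)
    fix y assume By: "B *v y = 0"
    have sLy: "(\<Sum>a\<in>UNIV. (L *v y) $ a) = 0"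
    proof -
      have "(\<Sum>a\<in>UNIV. (L *v y) $ a) = (\<Sum>a\<in>UNIV. \<Sum>b\<in>UNIV. L $ a $ b * y $ b)"
        by (simp add: matrix_vector_mult_def)
      also have "\<dots> = (\<Sum>b\<in>UNIV. \<Sum>a\<in>UNIV. L $ a $ b * y $ b)" by (rule sum.swap)
      also have "\<dots> = (\<Sum>b\<in>UNIV. (\<Sum>a\<in>UNIV. L $ a $ b) * y $ b)" by (simp add: sum_distrib_right)
      also have "\<dots> = 0" using Lcol by simp
      finally show ?thesis .
    qed
    have comp: "(L *v y) $ a + (\<Sum>b\<in>UNIV. y $ b) / n = 0" for a
    proof -
      have "(B *v y) $ a = 0" using By by simp
      then show ?thesis unfolding B_def by (simp add: matrix_vector_mult_add_rdistrib Ev)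
    qed
    have "(\<Sum>a\<in>UNIV. (L *v y) $ a + (\<Sum>b\<in>UNIV. y $ b) / n) = 0" using comp by simp
    then have "(\<Sum>b\<in>UNIV. y $ b) = 0" using sLy npos by (simp add: sum.distrib n_def)
    then have Ly: "L *v y = 0" using comp by (simp add: vec_eq_iff)
    have "y $ a = 0" for a
    proof -
      have "(\<Sum>b\<in>UNIV. y $ b) = (\<Sum>b\<in>(UNIV::'n set). y $ a)" using Lker[OF Ly] by (intro sum.cong refl) blast
      then have "n * y $ a = 0" using \<open>(\<Sum>b\<in>UNIV. y $ b) = 0\<close> by (simp add: n_def)
      then show ?thesis using npos by simp
    qed
    then show "y = 0" by (simp add: vec_eq_iff)
  qed
  obtain N where NB: "N ** B = mat 1" using Binj matrix_left_invertible_ker by blast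
  then have BN: "B ** N = mat 1" using matrix_left_right_inverse by blast
  have BE: "B ** E = E" unfolding B_def by (simp add: mm_add_r LE EE)
  have EB: "E ** B = E" unfolding B_def by (simp add: matrix_add_ldistrib EL EE)
  have NE: "N ** E = E"
  proof -
    have "N ** E = N ** (B ** E)" by (simp only: BE)
    also have "\<dots> = E" using NB by (simp add: matrix_mul_assoc)
    finally show ?thesis .
  qed
  have EN: "E ** N = E"
  proof -
    have "E ** N = (E ** B) ** N" by (simp only: EB)
    also have "\<dots> = E" using BN by (simp add: matrix_mul_assoc[symmetric])
    finally show ?thesis .
  qed
  have LeqB: "L = B - E" unfolding B_def by simp
  define X where "X = N - E"
  have LX: "L ** X = mat 1 - E"
  proof -
    have "L ** X = L ** N - L ** E" unfolding X_def by (rule mm_diff_l)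
    also have "\<dots> = L ** N" using LE by simp
    also have "\<dots> = (B - E) ** N" using LeqB by simp
    also have "\<dots> = mat 1 - E" by (simp add: mm_diff_r BN EN)
    finally show ?thesis .
  qed
  have XL: "X ** L = mat 1 - E"
  proof -
    have "X ** L = N ** L - E ** L" unfolding X_def by (rule mm_diff_r)
    also have "\<dots> = N ** (B - E)" using EL LeqB by simp
    also have "\<dots> = mat 1 - E" by (simp add: mm_diff_l NB NE)
    finally show ?thesis .
  qed
  have Esym: "transpose E = E" by (simp add: E_def transpose_def vec_eq_iff)
  have Isym: "transpose (mat 1 :: real^'n^'n) = mat 1" by (simp add: transpose_mat)
  have tsub: "transpose (mat 1 - E) = mat 1 - E"
    using Esym Isym by (simp add: transpose_def vec_eq_iff)
  have pc: "penrose_conds L X"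
    unfolding penrose_conds_def
  proof (intro conjI)
    show "L ** X ** L = L" unfolding LX mm_diff_r EL by simp
    show "X ** L ** X = X"
    proof -
      have "E ** X = 0" unfolding X_def mm_diff_l EN EE by simp
      then show ?thesis unfolding XL mm_diff_r by simp
    qed
    show "transpose (L ** X) = L ** X" unfolding LX by (rule tsub)
    show "transpose (X ** L) = X ** L" unfolding XL by (rule tsub)
  qed
  have pinvX: "pinv L = X"
    unfolding pinv_def
  proof (rule the_equality)
    show "penrose_conds L X" by (rule pc)
    show "\<And>Y. penrose_conds L Y \<Longrightarrow> Y = X" using pinv_unique pc by blast
  qed
  define v :: "real^'n" where "v = (\<chi> j. (if j = m then 1 else 0) - (if j = k then 1 else 0))"
  define x where "x = X *v v"
  have sv: "(\<Sum>b\<in>UNIV. v $ b) = 0" by (simp add: v_def sum_subtractf)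
  have Lx: "L *v x = v"
  proof -
    have "L *v x = (mat 1 - E) *v v" unfolding x_def matrix_vector_mul_assoc LX ..
    also have "\<dots> = v - E *v v" by (simp add: matrix_vector_mult_diff_rdistrib)
    also have "E *v v = 0" using sv by (simp add: vec_eq_iff Ev)
    finally show ?thesis by simp
  qed
  have h: "\<forall>j. j \<noteq> k \<longrightarrow> (\<forall>l. x $ j \<le> x $ l) \<longrightarrow> (\<forall>l. (j, l) \<in> edge_rel A \<longrightarrow> x $ l \<le> x $ j)"
  proof (intro allI impI)
    fix j l assume a1: "j \<noteq> k" and a2: "\<forall>l. x $ j \<le> x $ l" and a3: "(j, l) \<in> edge_rel A"
    have "0 \<le> (L *v x) $ j" using a1 by (simp add: Lx v_def)
    then show "x $ l \<le> x $ j" using stepR a2 a3 by blast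
  qed
  have "x $ k \<le> x $ i" using minprin[OF scR h, of i] by simp
  moreover have "x $ a = X $ a $ m - X $ a $ k" for a
    by (simp add: x_def v_def matrix_vector_mult_def right_diff_distrib sum_subtractf sdr1)
  ultimately show ?thesis unfolding Let_def L_def[symmetric] pinvX by simp
qed

end
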